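(* Let $\kappa$ be a regular cardinal and $\mu$ a singular cardinal. ($\aleph$) Let $\lambda\geq{\rm cf}(\lambda)>\kappa^{++}$. For every family $\mathcal{C}$ of clubs at $\kappa^{++}$ with $|\mathcal{C}|=\lambda$ there is $\mathcal{E}\subseteq\mathcal{C}$ with $|\mathcal{E}|=\lambda$ such that $|\bigcap\mathcal{E}|\geq\kappa$. ($\beth$) Assume $\lambda\geq{\rm cf}(\lambda)>\mu^+$ and that the family $\mathcal{C}$ of clubs at $\mu^+$, $|\mathcal{C}|=\lambda$, witnesses the failure of $\mathrm{Gal}(\mathcal{D}_{\mu^+},\mu^+,\lambda)$. Then for every $\theta<\mu$ there is $\mathcal{E}\subseteq\mathcal{C}$ with $|\mathcal{E}|=\lambda$ such that $|\bigcap\mathcal{E}|\geq\theta$. ($\gimel$) Assume $\kappa$ is a weakly inaccessible cardinal. Then the conclusion of ($\beth$) holds with $\mu$ replaced by $\kappa$: if $\lambda\geq{\rm cf}(\lambda)>\kappa^+$ and the family $\mathcal{C}$ of clubs at $\kappa^+$, $|\mathcal{C}|=\lambda$, witnesses the failure of $\mathrm{Gal}(\mathcal{D}_{\kappa^+},\kappa^+,\lambda)$, then for every $\theta<\kappa$ there is $\mathcal{E}\subseteq\mathcal{C}$ with $|\mathcal{E}|=\lambda$ and $|\bigcap\mathcal{E}|\geq\theta$.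
   Context: For a regular uncountable cardinal $\theta$, $\mathcal{D}_\theta$ denotes the club filter on $\theta$. For a filter $\mathcal{F}$ and cardinals $\mu\leq\lambda$, $\mathrm{Gal}(\mathcal{F},\mu,\lambda)$ is the statement: for every $\mathcal{C}\subseteq\mathcal{F}$ with $|\mathcal{C}|=\lambda$ there is $\mathcal{E}\subseteq\mathcal{C}$ with $|\mathcal{E}|=\mu$ such that $\bigcap\mathcal{E}\in\mathcal{F}$; a family $\mathcal{C}$ witnesses its failure if it is a counterexample to this statement. *)

theory Defs
  imports Main
begin

unbundle cardinal_syntax

text \<open>Cardinals are represented, as in Main's BNF cardinal library, by cardinal-order
relations (well-orders that are initial); an ordinal is a well-order relation.\<close>

definition cf_gt :: "'a rel \<Rightarrow> 'b rel \<Rightarrow> bool" where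
  "cf_gt lam nu \<longleftrightarrow> (\<forall>A. A \<subseteq> Field lam \<and> cofinal A lam \<longrightarrow> nu <o (card_of (A)))"

definition closed_in :: "'a rel \<Rightarrow> 'a set \<Rightarrow> bool" where
  "closed_in r C \<longleftrightarrow>
     (\<forall>a \<in> Field r.
        (\<exists>b. (b, a) \<in> r \<and> b \<noteq> a) \<and>
        (\<forall>b. (b, a) \<in> r \<and> b \<noteq> a \<longrightarrow>
              (\<exists>c \<in> C. (b, c) \<in> r \<and> b \<noteq> c \<and> (c, a) \<in> r \<and> c \<noteq> a))
        \<longrightarrow> a \<in> C)"

definition club :: "'a rel \<Rightarrow> 'a set \<Rightarrow> bool" where
  "club r C \<longleftrightarrow> C \<subseteq> Field r \<and> closed_in r C \<and> cofinal C r"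

definition club_filter :: "'a rel \<Rightarrow> 'a set set" where
  "club_filter r = {X. X \<subseteq> Field r \<and> (\<exists>D. club r D \<and> D \<subseteq> X)}"

definition Gal :: "'a set set \<Rightarrow> 'm rel \<Rightarrow> 'l rel \<Rightarrow> bool" where
  "Gal F mu lam \<longleftrightarrow>
     (\<forall>C. C \<subseteq> F \<and> (card_of (C)) =o lam \<longrightarrow> (\<exists>E. E \<subseteq> C \<and> (card_of (E)) =o mu \<and> \<Inter>E \<in> F))"

definition Gal_fail_witness :: "'a set set \<Rightarrow> 'm rel \<Rightarrow> 'l rel \<Rightarrow> 'a set set \<Rightarrow> bool" where
  "Gal_fail_witness F mu lam C \<longleftrightarrow>
     C \<subseteq> F \<and> (card_of (C)) =o lam \<and> \<not> (\<exists>E. E \<subseteq> C \<and> (card_of (E)) =o mu \<and> \<Inter>E \<in> F)"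

definition regular_cardinal :: "'a rel \<Rightarrow> bool" where
  "regular_cardinal k \<longleftrightarrow> Card_order k \<and> cinfinite k \<and> regularCard k"

definition singular_cardinal :: "'a rel \<Rightarrow> bool" where
  "singular_cardinal k \<longleftrightarrow> Card_order k \<and> cinfinite k \<and> \<not> regularCard k"

definition weakly_inaccessible :: "'a rel \<Rightarrow> bool" where
  "weakly_inaccessible k \<longleftrightarrow> regular_cardinal k \<and> card_of (UNIV :: nat set) <o k \<and>
     (\<forall>nu :: 'a rel. Card_order nu \<and> nu <o k \<longrightarrow> cardSuc nu <o k)"

end

theory Submission imports Defs begin

lemma ins_lt: assumes "Card_order k" "infinite (Field k)" "|B| <o k" shows "|insert z B| <o k"
proof -
  have "|{z}| <o k"
  proof -
    have "finite (Field (card_of {z}))" by (simp add: Field_card_of)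
    moreover have "Well_order k" using assms(1) unfolding card_order_on_def by blast
    ultimately show ?thesis using finite_ordLess_infinite[OF card_of_Well_order] assms(2) by blast
  qed
  then show ?thesis using card_of_Un_ordLess_infinite_Field[OF assms(2,1) assms(3)] by (metis insert_is_Un sup_commute)
qed

lemma fin_lt: assumes "Card_order k" "infinite (Field k)" "finite B" shows "|B| <o k"
proof -
  have "finite (Field (card_of B))" using assms(3) by (simp add: Field_card_of)
  moreover have "Well_order k" using assms(1) unfolding card_order_on_def by blast
  ultimately show ?thesis using finite_ordLess_infinite[OF card_of_Well_order] assms(2) by blast
qed

locale CG =
  fixes r :: "'a rel"
  assumes CO: "Card_order r" and REG: "regularCard r" and UNC: "|UNIV :: nat set| <o r"
begin

abbreviation "A \<equiv> Field r"

lemma WO: "Well_order r" using CO unfolding card_order_on_def by blast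
lemma wo: "wo_rel r" using WO wo_rel_def by blast

lemma INF: "infinite A"
proof -
  have "|UNIV :: nat set| \<le>o |A|"
    using UNC card_of_Field_ordIso[OF CO] ordLess_ordIso_trans ordIso_symmetric ordLess_imp_ordLeq by blast
  then show ?thesis using card_of_ordLeq_infinite infinite_UNIV_nat by blast
qed

lemma TOT: "a \<in> A \<Longrightarrow> b \<in> A \<Longrightarrow> (a,b) \<in> r \<or> (b,a) \<in> r"
  using wo_rel.TOTALS[OF wo] by blast
lemma ANTI: "(a,b) \<in> r \<Longrightarrow> (b,a) \<in> r \<Longrightarrow> a = b"
  using wo_rel.ANTISYM[OF wo] unfolding antisym_def by blast
lemma TRANS: "(a,b) \<in> r \<Longrightarrow> (b,c) \<in> r \<Longrightarrow> (a,c) \<in> r"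
  using wo_rel.TRANS[OF wo] unfolding trans_def by blast
lemma REFL: "a \<in> A \<Longrightarrow> (a,a) \<in> r"
  using wo_rel.REFL[OF wo] unfolding refl_on_def by blast
lemma FLD: "(a,b) \<in> r \<Longrightarrow> a \<in> A \<and> b \<in> A"
  by (simp add: FieldI1 FieldI2)

lemma MIN: assumes "B \<subseteq> A" "B \<noteq> {}" shows "\<exists>b\<in>B. \<forall>c\<in>B. (b,c) \<in> r"
proof -
  have wf: "wf (r - Id)" using WO unfolding well_order_on_def by blast
  obtain b where b: "b \<in> B" "\<And>c. (c,b) \<in> r - Id \<Longrightarrow> c \<notin> B"
    using wfE_min[OF wf] assms(2) by (metis ex_in_conv)
  show ?thesis
  proof (intro bexI[OF _ b(1)] ballI)
    fix c assume "c \<in> B"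
    show "(b,c) \<in> r"
    proof (cases "b = c")
      case True then show ?thesis using REFL \<open>c \<in> B\<close> assms(1) by blast
    next
      case False
      have "(b,c) \<in> r \<or> (c,b) \<in> r" using TOT \<open>c \<in> B\<close> b(1) assms(1) by blast
      moreover have "(c,b) \<notin> r" using b(2)[of c] False \<open>c \<in> B\<close> by blast
      ultimately show ?thesis by blast
    qed
  qed
qed

lemma NOMAX: "a \<in> A \<Longrightarrow> \<exists>b. (a,b) \<in> r \<and> a \<noteq> b"
  using infinite_Card_order_limit[OF CO INF] by blast

lemma BND: assumes "X \<subseteq> A" "|X| <o r" shows "\<exists>u\<in>A. \<forall>x\<in>X. (x,u) \<in> r"
proof (rule ccontr)
  assume neg: "\<not> ?thesis"
  have "cofinal X r" unfolding cofinal_def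
  proof
    fix a assume a: "a \<in> A"
    then obtain x where x: "x \<in> X" "(x,a) \<notin> r" using neg by blast
    then have "(a,x) \<in> r" using TOT a assms(1) by blast
    moreover have "a \<noteq> x" using x a REFL by blast
    ultimately show "\<exists>b\<in>X. a \<noteq> b \<and> (a,b) \<in> r" using x by blast
  qed
  then have "|X| =o r" using REG assms(1) unfolding regularCard_def by blast
  then show False using assms(2) not_ordLess_ordIso by blast
qed

lemma SBND: assumes "X \<subseteq> A" "|X| <o r" shows "\<exists>u\<in>A. \<forall>x\<in>X. (x,u) \<in> r \<and> x \<noteq> u"
proof -
  obtain u where u: "u \<in> A" "\<forall>x\<in>X. (x,u) \<in> r" using BND assms by blast
  obtain v where v: "(u,v) \<in> r" "u \<noteq> v" using NOMAX u(1) by blast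
  show ?thesis
  proof (intro bexI[of _ v] ballI conjI)
    fix x assume "x \<in> X"
    then have xu: "(x,u) \<in> r" using u by blast
    then show "(x,v) \<in> r" using v TRANS by blast
    show "x \<noteq> v"
    proof
      assume "x = v" then have "u = v" using xu v ANTI by blast
      then show False using v by blast
    qed
  next show "v \<in> A" using v FLD by blast
  qed
qed

lemma CLUB_CARD: assumes "club r D" shows "|D| =o r"
proof -
  have "D \<subseteq> A" "cofinal D r" using assms unfolding club_def by auto
  then show ?thesis using REG unfolding regularCard_def by blast
qed

lemma small_ins: "|X| <o r \<Longrightarrow> |insert x X| <o r"
proof -
  assume a: "|X| <o r"
  have "|{x}| <o r"
  proof -
    have "finite (Field (card_of {x}))" by (simp add: Field_card_of)
    then show ?thesis using finite_ordLess_infinite[OF card_of_Well_order WO] INF by blast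
  qed
  then show ?thesis using card_of_Un_ordLess_infinite_Field[OF INF CO a] by (metis insert_is_Un sup_commute)
qed

definition lub :: "'a set \<Rightarrow> 'a" where
  "lub X = (SOME u. u \<in> A \<and> (\<forall>x\<in>X. (x,u)\<in>r) \<and> (\<forall>v\<in>A. (\<forall>x\<in>X. (x,v)\<in>r) \<longrightarrow> (u,v)\<in>r))"

lemma LUB: assumes "\<exists>v\<in>A. \<forall>x\<in>X. (x,v)\<in>r"
  shows "lub X \<in> A \<and> (\<forall>x\<in>X. (x,lub X)\<in>r) \<and> (\<forall>v\<in>A. (\<forall>x\<in>X. (x,v)\<in>r) \<longrightarrow> (lub X,v)\<in>r)"
proof -
  let ?U = "{v\<in>A. \<forall>x\<in>X. (x,v)\<in>r}"
  obtain u where "u \<in> ?U" "\<forall>c\<in>?U. (u,c) \<in> r" using MIN[of ?U] assms by blast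
  then have "\<exists>u. u \<in> A \<and> (\<forall>x\<in>X. (x,u)\<in>r) \<and> (\<forall>v\<in>A. (\<forall>x\<in>X. (x,v)\<in>r) \<longrightarrow> (u,v)\<in>r)" by blast
  then show ?thesis unfolding lub_def by (rule someI_ex)
qed

lemma lt_trans1: "(a,b) \<in> r \<Longrightarrow> (b,c) \<in> r \<Longrightarrow> b \<noteq> c \<Longrightarrow> (a,c) \<in> r \<and> a \<noteq> c"
proof -
  assume h: "(a,b) \<in> r" "(b,c) \<in> r" "b \<noteq> c"
  have ac: "(a,c) \<in> r" using TRANS[OF h(1) h(2)] .
  have "a \<noteq> c"
  proof
    assume "a = c" then have "(c,b) \<in> r" using h(1) by simp
    then show False using ANTI[OF h(2)] h(3) by simp
  qed
  then show ?thesis using ac by simp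
qed
lemma lt_trans2: "(a,b) \<in> r \<Longrightarrow> a \<noteq> b \<Longrightarrow> (b,c) \<in> r \<Longrightarrow> (a,c) \<in> r \<and> a \<noteq> c"
proof -
  assume h: "(a,b) \<in> r" "a \<noteq> b" "(b,c) \<in> r"
  have ac: "(a,c) \<in> r" using TRANS[OF h(1) h(3)] .
  have "a \<noteq> c"
  proof
    assume "a = c" then have "(b,a) \<in> r" using h(3) by simp
    then show False using ANTI[OF h(1)] h(2) by simp
  qed
  then show ?thesis using ac by simp
qed
lemma not_le: "a \<in> A \<Longrightarrow> b \<in> A \<Longrightarrow> (a,b) \<notin> r \<Longrightarrow> (b,a) \<in> r \<and> b \<noteq> a"
proof -
  assume h: "a \<in> A" "b \<in> A" "(a,b) \<notin> r"
  have "(b,a) \<in> r" using TOT[OF h(1) h(2)] h(3) by blast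
  moreover have "b \<noteq> a" using REFL[OF h(1)] h(3) by blast
  ultimately show ?thesis by blast
qed

lemma LUB_lt: assumes "\<exists>v\<in>A. \<forall>x\<in>X. (x,v)\<in>r" "(c, lub X) \<in> r" "c \<noteq> lub X"
  shows "\<exists>x\<in>X. (c,x) \<in> r \<and> c \<noteq> x"
proof (rule ccontr)
  assume neg: "\<not> ?thesis"
  have cA: "c \<in> A" using assms(2) FLD by blast
  have "\<forall>x\<in>X. (x,c) \<in> r"
  proof
    fix x assume x: "x \<in> X"
    then have "x \<in> A" using LUB[OF assms(1)] FLD by blast
    then show "(x,c) \<in> r" using neg x cA not_le[of c x] by blast
  qed
  then have "(lub X, c) \<in> r" using LUB[OF assms(1)] cA by blast
  then show False using assms(2,3) ANTI by blast
qed

lemma INTER: assumes cl: "\<forall>D\<in>F. club r D" and sm: "|F| <o r" shows "club r (A \<inter> \<Inter>F)"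
  unfolding club_def
proof (intro conjI)
  show "A \<inter> \<Inter>F \<subseteq> A" by blast
  show "closed_in r (A \<inter> \<Inter>F)" unfolding closed_in_def
  proof (intro ballI impI)
    fix a assume a: "a \<in> A" and h: "(\<exists>b. (b, a) \<in> r \<and> b \<noteq> a) \<and>
           (\<forall>b. (b, a) \<in> r \<and> b \<noteq> a \<longrightarrow> (\<exists>c\<in>A \<inter> \<Inter> F. (b, c) \<in> r \<and> b \<noteq> c \<and> (c, a) \<in> r \<and> c \<noteq> a))"
    have "a \<in> D" if D: "D \<in> F" for D
    proof -
      have "closed_in r D" using cl D unfolding club_def by blast
      moreover have "(\<exists>b. (b, a) \<in> r \<and> b \<noteq> a) \<and>
           (\<forall>b. (b, a) \<in> r \<and> b \<noteq> a \<longrightarrow> (\<exists>c\<in>D. (b, c) \<in> r \<and> b \<noteq> c \<and> (c, a) \<in> r \<and> c \<noteq> a))"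
        using h D by blast
      ultimately show ?thesis using a unfolding closed_in_def by blast
    qed
    then show "a \<in> A \<inter> \<Inter>F" using a by blast
  qed
  show "cofinal (A \<inter> \<Inter>F) r" unfolding cofinal_def
  proof
    fix a assume a: "a \<in> A"
    have ex_next: "\<exists>y. (x,y)\<in>r \<and> x\<noteq>y \<and> (\<forall>D\<in>F. \<exists>d\<in>D. (x,d)\<in>r \<and> x\<noteq>d \<and> (d,y)\<in>r)"
      if x: "x \<in> A" for x
    proof -
      have ex: "\<forall>D\<in>F. \<exists>d. d \<in> D \<and> (x,d)\<in>r \<and> x\<noteq>d"
      proof
        fix D assume D: "D \<in> F"
        then have "cofinal D r" using cl unfolding club_def by blast
        then obtain d where "d \<in> D" "x \<noteq> d" "(x,d) \<in> r" using x unfolding cofinal_def by blast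
        then show "\<exists>d. d \<in> D \<and> (x,d)\<in>r \<and> x\<noteq>d" by blast
      qed
      from bchoice[OF ex] obtain f where f: "\<forall>D\<in>F. f D \<in> D \<and> (x, f D)\<in>r \<and> x \<noteq> f D" ..
      let ?X = "insert x (f ` F)"
      have XA: "?X \<subseteq> A"
      proof
        fix z assume "z \<in> ?X"
        then have "z = x \<or> (\<exists>D\<in>F. z = f D)" by blast
        then show "z \<in> A"
        proof
          assume "z = x" then show ?thesis using x by simp
        next
          assume "\<exists>D\<in>F. z = f D"
          then obtain D where "D \<in> F" "z = f D" by blast
          then have "(x,z) \<in> r" using f by simp
          then show ?thesis using FLD by blast
        qed
      qed
      have "|f ` F| <o r" using ordLeq_ordLess_trans[OF card_of_image sm] .
      then have "|?X| <o r" by (rule small_ins)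
      then obtain u where u: "u \<in> A" "\<forall>z\<in>?X. (z,u) \<in> r \<and> z \<noteq> u" using SBND[OF XA] by blast
      have xu: "(x,u)\<in>r \<and> x\<noteq>u" using u(2) by blast
      have "\<forall>D\<in>F. \<exists>d\<in>D. (x,d)\<in>r \<and> x\<noteq>d \<and> (d,u)\<in>r"
      proof
        fix D assume D: "D \<in> F"
        have "f D \<in> ?X" using D by blast
        then have "(f D, u) \<in> r" using u(2) by blast
        then show "\<exists>d\<in>D. (x,d)\<in>r \<and> x\<noteq>d \<and> (d,u)\<in>r" using f D by blast
      qed
      then show ?thesis using xu by blast
    qed
    define nxt where "nxt x = (SOME y. (x,y)\<in>r \<and> x\<noteq>y \<and> (\<forall>D\<in>F. \<exists>d\<in>D. (x,d)\<in>r \<and> x\<noteq>d \<and> (d,y)\<in>r))" for x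
    have nxt: "(x,nxt x)\<in>r \<and> x\<noteq>nxt x \<and> (\<forall>D\<in>F. \<exists>d\<in>D. (x,d)\<in>r \<and> x\<noteq>d \<and> (d,nxt x)\<in>r)"
      if "x \<in> A" for x
      unfolding nxt_def using someI_ex[OF ex_next[OF that]] .
    define s where "s n = (nxt ^^ n) a" for n
    have sS: "s (Suc n) = nxt (s n)" for n unfolding s_def by simp
    have sA: "s n \<in> A" for n
    proof (induction n)
      case 0 then show ?case using a s_def by simp
    next
      case (Suc n)
      have "(s n, nxt (s n)) \<in> r" using nxt[OF Suc.IH] by blast
      then show ?case using sS[of n] FLD by simp
    qed
    have smono: "m < n \<Longrightarrow> (s m, s n) \<in> r \<and> s m \<noteq> s n" for m n
    proof (induction n)
      case 0 then show ?case by simp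
    next
      case (Suc n)
      have st: "(s n, s (Suc n)) \<in> r \<and> s n \<noteq> s (Suc n)" using nxt[OF sA[of n]] sS by simp
      show ?case
      proof (cases "m = n")
        case True then show ?thesis using st by simp
      next
        case False then have "m < n" using Suc.prems by simp
        then have "(s m, s n) \<in> r \<and> s m \<noteq> s n" using Suc.IH by blast
        then show ?thesis using st lt_trans2[of "s m" "s n" "s (Suc n)"] by blast
      qed
    qed
    have bnd: "\<exists>v\<in>A. \<forall>x\<in>range s. (x,v)\<in>r"
    proof (rule BND)
      show "range s \<subseteq> A" using sA by blast
      show "|range s| <o r" using ordLeq_ordLess_trans[OF card_of_image UNC] .
    qed
    define b where "b = lub (range s)"
    have bA: "b \<in> A" and bub: "\<forall>n. (s n, b) \<in> r" using LUB[OF bnd] b_def by auto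
    have sb: "(s n, b) \<in> r \<and> s n \<noteq> b" for n
      using smono[of n "Suc n"] bub lt_trans2[of "s n" "s (Suc n)" b] by blast
    have "b \<in> D" if D: "D \<in> F" for D
    proof -
      have "closed_in r D" using cl D unfolding club_def by blast
      moreover have "\<exists>c. (c, b) \<in> r \<and> c \<noteq> b" using sb by blast
      moreover have "\<exists>d\<in>D. (c, d) \<in> r \<and> c \<noteq> d \<and> (d, b) \<in> r \<and> d \<noteq> b"
        if c: "(c, b) \<in> r" "c \<noteq> b" for c
      proof -
        obtain x where x: "x \<in> range s" "(c,x) \<in> r" "c \<noteq> x"
          using LUB_lt[OF bnd] c b_def by blast
        then obtain n where n: "x = s n" by blast
        obtain d where d: "d \<in> D" "(s n,d)\<in>r" "s n\<noteq>d" "(d,s (Suc n))\<in>r"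
        proof -
          have "\<exists>d\<in>D. (s n,d)\<in>r \<and> s n\<noteq>d \<and> (d,nxt (s n))\<in>r" using nxt[OF sA[of n]] D by blast
          then show ?thesis using that sS[of n] by auto
        qed
        have "(c, s n) \<in> r" "c \<noteq> s n" using x n by simp_all
        then have "(c,d) \<in> r \<and> c \<noteq> d" using d lt_trans2[of c "s n" d] by blast
        moreover have "(d,b) \<in> r \<and> d \<noteq> b" using d(4) sb[of "Suc n"] lt_trans1[of d "s (Suc n)" b] by blast
        ultimately show ?thesis using d(1) by blast
      qed
      ultimately show ?thesis using bA unfolding closed_in_def by blast
    qed
    then have "b \<in> A \<inter> \<Inter>F" using bA by blast
    moreover have "a \<noteq> b \<and> (a,b) \<in> r" using sb[of 0] s_def by simp
    ultimately show "\<exists>b\<in>A \<inter> \<Inter>F. a \<noteq> b \<and> (a, b) \<in> r" by blast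
  qed
qed

end

locale CG2 = CG r for r :: "'a rel" +
  fixes k :: "'k rel"
  assumes kCO: "Card_order k" and kINF: "infinite (Field k)" and kREG: "regularCard k"
    and kLT: "cardSuc k <o r"
begin

lemma kWO: "Well_order k" using kCO unfolding card_order_on_def by blast
lemma kCinf: "Cinfinite k" using kCO kINF unfolding cinfinite_def by blast

lemma klt: "k <o r" using ordLess_transitive[OF cardSuc_greater[OF kCO] kLT] .

definition unb :: "'a \<Rightarrow> 'a set \<Rightarrow> bool" where
  "unb d Z \<longleftrightarrow> (\<forall>b. (b,d) \<in> r \<and> b \<noteq> d \<longrightarrow> (\<exists>z\<in>Z. (b,z) \<in> r \<and> b \<noteq> z))"

definition acc :: "'a set \<Rightarrow> 'a set" where
  "acc E = {a\<in>A. (\<exists>b. (b,a) \<in> r \<and> b \<noteq> a) \<and>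
      (\<forall>b. (b,a) \<in> r \<and> b \<noteq> a \<longrightarrow> (\<exists>c\<in>E. (b,c) \<in> r \<and> b \<noteq> c \<and> (c,a) \<in> r \<and> c \<noteq> a))}"

definition S :: "'a set" where
  "S = {d\<in>A. (\<exists>L. L \<subseteq> underS r d \<and> |L| \<le>o k \<and> unb d L) \<and>
             (\<forall>Z. Z \<subseteq> underS r d \<and> unb d Z \<longrightarrow> k \<le>o card_of Z)}"

lemma EXS: assumes X: "club r X" shows "\<exists>d\<in>S. d \<in> acc X"
proof -
  have XA: "X \<subseteq> A" using X unfolding club_def by blast
  have Xr: "|X| =o r" using CLUB_CARD[OF X] .
  define Y where "Y = {y\<in>X. |X \<inter> underS r y| <o k}"
  have YX: "Y \<subseteq> X" unfolding Y_def by blast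
  have sm_under: "|X \<inter> under r y| <o k" if y: "y \<in> Y" for y
  proof -
    have sub: "X \<inter> under r y \<subseteq> insert y (X \<inter> underS r y)" unfolding under_def underS_def by blast
    have "|X \<inter> underS r y| <o k" using y unfolding Y_def by blast
    then have "|insert y (X \<inter> underS r y)| <o k" by (rule ins_lt[OF kCO kINF])
    then show ?thesis by (rule ordLeq_ordLess_trans[OF card_of_mono1[OF sub]])
  qed
  have a: "\<exists>y\<in>Y. \<forall>z\<in>Z. (z,y) \<in> r \<and> z \<noteq> y" if Z: "Z \<subseteq> Y" "|Z| <o k" for Z
  proof -
    define W where "W = (\<Union>z\<in>Z. X \<inter> under r z)"
    have "\<forall>z\<in>Z. |X \<inter> under r z| <o k" using sm_under Z(1) by blast
    from card_of_UNION_ordLess_infinite_Field_regularCard[OF kREG kCinf Z(2) this]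
    have W: "|W| <o k" unfolding W_def .
    have "\<not> X \<subseteq> W"
    proof
      assume "X \<subseteq> W"
      then have "|X| \<le>o |W|" by (rule card_of_mono1)
      then have "|X| <o r" by (rule ordLeq_ordLess_trans[OF _ ordLess_transitive[OF W klt]])
      then show False using Xr not_ordLess_ordIso by blast
    qed
    then have ne: "X - W \<noteq> {}" by blast
    obtain y where y: "y \<in> X - W" "\<forall>c\<in>X - W. (y,c) \<in> r" using MIN[of "X - W"] ne XA by blast
    have "X \<inter> underS r y \<subseteq> W"
    proof
      fix x assume x: "x \<in> X \<inter> underS r y"
      show "x \<in> W"
      proof (rule ccontr)
        assume "x \<notin> W"
        then have "(y,x) \<in> r" using y x by blast
        moreover have "(x,y) \<in> r" "x \<noteq> y" using x unfolding underS_def by auto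
        ultimately show False using ANTI by blast
      qed
    qed
    then have "|X \<inter> underS r y| <o k" by (rule ordLeq_ordLess_trans[OF card_of_mono1 W])
    then have yY: "y \<in> Y" unfolding Y_def using y by blast
    have "\<forall>z\<in>Z. (z,y) \<in> r \<and> z \<noteq> y"
    proof
      fix z assume z: "z \<in> Z"
      show "(z,y) \<in> r \<and> z \<noteq> y"
      proof (rule ccontr)
        assume "\<not> ((z,y) \<in> r \<and> z \<noteq> y)"
        then have "(y,z) \<in> r"
          using not_le[of z y] REFL XA y(1) z Z(1) YX by blast
        then have "y \<in> W" unfolding W_def under_def using z y(1) by blast
        then show False using y(1) by blast
      qed
    qed
    then show ?thesis using yY by blast
  qed
  have kY: "k \<le>o |Y|"
  proof -
    have "\<not> |Y| <o k"
    proof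
      assume "|Y| <o k"
      then obtain y where "y \<in> Y" "\<forall>z\<in>Y. (z,y) \<in> r \<and> z \<noteq> y" using a by blast
      then show False by blast
    qed
    then show ?thesis using ordLess_or_ordLeq[OF card_of_Well_order kWO, of Y] by blast
  qed
  have "|Field k| \<le>o |Y|" using ordIso_ordLeq_trans[OF card_of_Field_ordIso[OF kCO] kY] .
  then have "\<exists>f. inj_on f (Field k) \<and> f ` Field k \<subseteq> Y" by (simp only: card_of_ordLeq)
  then obtain f where f: "inj_on f (Field k)" "f ` Field k \<subseteq> Y" by blast
  define Y' where "Y' = f ` Field k"
  have Y'Y: "Y' \<subseteq> Y" using f Y'_def by blast
  have Y'k: "|Y'| =o k"
  proof -
    have "bij_betw f (Field k) Y'" using f(1) Y'_def by (simp add: inj_on_imp_bij_betw)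
    then have "|Field k| =o |Y'|" by (rule card_of_ordIso[THEN iffD1, OF exI])
    then show ?thesis by (rule ordIso_transitive[OF ordIso_symmetric card_of_Field_ordIso[OF kCO]])
  qed
  have cof: "\<exists>y'\<in>Y'. (y,y') \<in> r" if y: "y \<in> Y" for y
  proof (rule ccontr)
    assume neg: "\<not> ?thesis"
    have "Y' \<subseteq> X \<inter> under r y"
    proof
      fix y' assume y': "y' \<in> Y'"
      then have "(y,y') \<notin> r" using neg by blast
      then have "(y',y) \<in> r" using not_le[of y y'] y y' Y'Y YX XA by blast
      then show "y' \<in> X \<inter> under r y" using y' Y'Y YX unfolding under_def by blast
    qed
    then have "|Y'| <o k" by (rule ordLeq_ordLess_trans[OF card_of_mono1 sm_under[OF y]])
    then show False using Y'k not_ordLess_ordIso by blast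
  qed
  have bnd: "\<exists>v\<in>A. \<forall>x\<in>Y. (x,v)\<in>r"
  proof -
    have "|Y'| <o r" using ordIso_ordLess_trans[OF Y'k klt] .
    moreover have "Y' \<subseteq> A" using Y'Y YX XA by blast
    ultimately obtain u where u: "u \<in> A" "\<forall>x\<in>Y'. (x,u) \<in> r" using BND[of Y'] by blast
    have "\<forall>x\<in>Y. (x,u)\<in>r"
    proof
      fix x assume "x \<in> Y"
      then obtain y' where "y' \<in> Y'" "(x,y') \<in> r" using cof by blast
      then show "(x,u) \<in> r" using u TRANS[of x y' u] by blast
    qed
    then show ?thesis using u(1) by blast
  qed
  define d where "d = lub Y"
  have dA: "d \<in> A" and dub: "\<forall>y\<in>Y. (y,d) \<in> r" using LUB[OF bnd] d_def by auto
  have ylt: "(y,d) \<in> r \<and> y \<noteq> d" if y: "y \<in> Y" for y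
  proof -
    have "|{y}| <o k" by (rule fin_lt[OF kCO kINF]) simp
    then obtain y2 where "y2 \<in> Y" "(y,y2) \<in> r \<and> y \<noteq> y2" using a[of "{y}"] y by blast
    then show ?thesis using dub lt_trans2[of y y2 d] by blast
  qed
  have Yne: "Y \<noteq> {}"
  proof -
    have "|{}::'a set| <o k" by (rule fin_lt[OF kCO kINF]) simp
    then show ?thesis using a[of "{}"] by blast
  qed
  have dacc: "d \<in> acc X"
    unfolding acc_def
  proof (intro CollectI conjI allI impI)
    show "d \<in> A" by (rule dA)
    show "\<exists>b. (b,d) \<in> r \<and> b \<noteq> d" using Yne ylt by blast
    fix b assume b: "(b,d) \<in> r \<and> b \<noteq> d"
    then obtain y where "y \<in> Y" "(b,y) \<in> r \<and> b \<noteq> y" using LUB_lt[OF bnd] d_def by blast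
    then show "\<exists>c\<in>X. (b,c) \<in> r \<and> b \<noteq> c \<and> (c,d) \<in> r \<and> c \<noteq> d" using ylt YX by blast
  qed
  have below: "\<exists>y\<in>Y. (b,y) \<in> r \<and> b \<noteq> y" if "(b,d) \<in> r" "b \<noteq> d" for b
    using LUB_lt[OF bnd] d_def that by blast
  have "d \<in> S" unfolding S_def
  proof (intro CollectI conjI)
    show "d \<in> A" by (rule dA)
    show "\<exists>L. L \<subseteq> underS r d \<and> |L| \<le>o k \<and> unb d L"
    proof (intro exI conjI)
      show "Y' \<subseteq> underS r d" using Y'Y ylt unfolding underS_def by blast
      show "|Y'| \<le>o k" using Y'k unfolding ordIso_iff_ordLeq by blast
      show "unb d Y'" unfolding unb_def
      proof (intro allI impI)
        fix b assume "(b,d) \<in> r \<and> b \<noteq> d"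
        then obtain y where y: "y \<in> Y" "(b,y) \<in> r \<and> b \<noteq> y" using below by blast
        then obtain y' where "y' \<in> Y'" "(y,y') \<in> r" using cof by blast
        then show "\<exists>z\<in>Y'. (b,z) \<in> r \<and> b \<noteq> z" using y lt_trans2[of b y y'] by blast
      qed
    qed
    show "\<forall>Z. Z \<subseteq> underS r d \<and> unb d Z \<longrightarrow> k \<le>o |Z|"
    proof (intro allI impI)
      fix Z assume Z: "Z \<subseteq> underS r d \<and> unb d Z"
      show "k \<le>o |Z|"
      proof (rule ccontr)
        assume nk: "\<not> k \<le>o |Z|"
        then have Zk: "|Z| <o k" using ordLess_or_ordLeq[OF card_of_Well_order kWO, of Z] by blast
        have "\<forall>z\<in>Z. \<exists>y. y \<in> Y \<and> (z,y) \<in> r \<and> z \<noteq> y"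
          using Z below unfolding underS_def by blast
        from bchoice[OF this] obtain g where g: "\<forall>z\<in>Z. g z \<in> Y \<and> (z,g z) \<in> r \<and> z \<noteq> g z" ..
        have "|g ` Z| <o k" using ordLeq_ordLess_trans[OF card_of_image Zk] .
        moreover have "g ` Z \<subseteq> Y" using g by blast
        ultimately obtain y where y: "y \<in> Y" "\<forall>x\<in>g ` Z. (x,y) \<in> r \<and> x \<noteq> y" using a by blast
        then obtain z where z: "z \<in> Z" "(y,z) \<in> r" "y \<noteq> z" using Z ylt unfolding unb_def by blast
        have "(z, g z) \<in> r" "z \<noteq> g z" "(g z, y) \<in> r" using g y z by auto
        then have "(z,y) \<in> r" "z \<noteq> y" using lt_trans2[of z "g z" y] by auto
        then show False using z ANTI by blast
      qed
    qed
  qed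
  then show ?thesis using dacc by blast
qed


definition lad :: "'a \<Rightarrow> 'a set" where
  "lad d = (SOME L. L \<subseteq> underS r d \<and> |L| \<le>o k \<and> unb d L)"

lemma LAD: assumes "d \<in> S" shows "lad d \<subseteq> underS r d \<and> |lad d| \<le>o k \<and> unb d (lad d)"
proof -
  have "\<exists>L. L \<subseteq> underS r d \<and> |L| \<le>o k \<and> unb d L" using assms unfolding S_def by blast
  then show ?thesis unfolding lad_def by (rule someI_ex)
qed

lemma SCOF: "d \<in> S \<Longrightarrow> Z \<subseteq> underS r d \<Longrightarrow> unb d Z \<Longrightarrow> k \<le>o |Z|"
  unfolding S_def by blast

definition gs :: "'a set \<Rightarrow> 'a \<Rightarrow> 'a set" where
  "gs E d = {lub (E \<inter> underS r a) | a. a \<in> lad d \<and> E \<inter> underS r a \<noteq> {}}"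

lemma ub_underS: "a \<in> A \<Longrightarrow> \<exists>v\<in>A. \<forall>x\<in>E \<inter> underS r a. (x,v)\<in>r"
  unfolding underS_def by blast

lemma lub_le: "a \<in> A \<Longrightarrow> (lub (E \<inter> underS r a), a) \<in> r"
proof -
  assume a: "a \<in> A"
  have "\<forall>x\<in>E \<inter> underS r a. (x,a)\<in>r" unfolding underS_def by blast
  then show ?thesis using LUB[OF ub_underS[OF a]] a by blast
qed

lemma GS_SUB: assumes d: "d \<in> S" shows "gs E d \<subseteq> underS r d"
proof
  fix x assume "x \<in> gs E d"
  then obtain a where a: "a \<in> lad d" "x = lub (E \<inter> underS r a)" unfolding gs_def by blast
  have ad: "(a,d) \<in> r" "a \<noteq> d" using a(1) LAD[OF d] unfolding underS_def by blast+
  then have aA: "a \<in> A" using FLD by blast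
  have "(x,a) \<in> r" using lub_le[OF aA] a(2) by simp
  then have "(x,d) \<in> r \<and> x \<noteq> d" using lt_trans1[of x a d] ad by blast
  then show "x \<in> underS r d" unfolding underS_def by blast
qed

lemma GS_UNB: assumes d: "d \<in> S" and dE: "d \<in> acc E" shows "unb d (gs E d)"
  unfolding unb_def
proof (intro allI impI)
  fix b assume b: "(b,d) \<in> r \<and> b \<noteq> d"
  obtain e where e: "e \<in> E" "(b,e) \<in> r" "b \<noteq> e" "(e,d) \<in> r" "e \<noteq> d"
    using dE b unfolding acc_def by blast
  obtain a where a: "a \<in> lad d" "(e,a) \<in> r" "e \<noteq> a"
    using LAD[OF d] e(4,5) unfolding unb_def by blast
  have aA: "a \<in> A" using a FLD by blast
  have eu: "e \<in> E \<inter> underS r a" using e a unfolding underS_def by blast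
  then have ne: "E \<inter> underS r a \<noteq> {}" by blast
  have "(e, lub (E \<inter> underS r a)) \<in> r" using LUB[OF ub_underS[OF aA]] eu by blast
  then have "(b, lub (E \<inter> underS r a)) \<in> r \<and> b \<noteq> lub (E \<inter> underS r a)"
    using lt_trans2[of b e] e by blast
  moreover have "lub (E \<inter> underS r a) \<in> gs E d" unfolding gs_def using a(1) ne by blast
  ultimately show "\<exists>z\<in>gs E d. (b,z) \<in> r \<and> b \<noteq> z" by blast
qed

lemma GS_BIG: "d \<in> S \<Longrightarrow> d \<in> acc E \<Longrightarrow> k \<le>o |gs E d|"
proof -
  assume d: "d \<in> S" and e: "d \<in> acc E"
  show ?thesis by (rule SCOF[OF d GS_SUB[OF d] GS_UNB[OF d e]])
qed

lemma LUB_IN: assumes D: "club r D" and Y: "Y \<noteq> {}" "Y \<subseteq> D" "Y \<subseteq> underS r a" and a: "a \<in> A"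
  shows "lub Y \<in> D"
proof (cases "lub Y \<in> Y")
  case True then show ?thesis using Y by blast
next
  case False
  have bnd: "\<exists>v\<in>A. \<forall>x\<in>Y. (x,v)\<in>r" using a Y(3) unfolding underS_def by blast
  note L = LUB[OF bnd]
  have "closed_in r D" using D unfolding club_def by blast
  moreover have "lub Y \<in> A" using L by blast
  moreover have "\<exists>b. (b, lub Y) \<in> r \<and> b \<noteq> lub Y"
  proof -
    obtain y where "y \<in> Y" using Y by blast
    then show ?thesis using L False by blast
  qed
  moreover have "\<exists>c\<in>D. (b, c) \<in> r \<and> b \<noteq> c \<and> (c, lub Y) \<in> r \<and> c \<noteq> lub Y"
    if bb: "(b, lub Y) \<in> r" "b \<noteq> lub Y" for b
  proof -
    obtain y where "y \<in> Y" "(b,y) \<in> r" "b \<noteq> y" using LUB_lt[OF bnd] bb by blast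
    then show ?thesis using L False Y(2) by blast
  qed
  ultimately show ?thesis unfolding closed_in_def by blast
qed

lemma acc_mono: "E \<subseteq> E' \<Longrightarrow> acc E \<subseteq> acc E'"
  unfolding acc_def by blast

lemma RHO: "\<exists>p\<in>A. k <o |underS r p|"
proof -
  have cw: "Well_order (cardSuc k)" using cardSuc_Card_order[OF kCO] unfolding card_order_on_def by blast
  obtain p where p: "p \<in> A" "cardSuc k =o Restr r (underS r p)"
    using ordLess_iff_ordIso_Restr[OF WO cw] kLT by blast
  have "|Field (cardSuc k)| \<le>o |Field (Restr r (underS r p))|"
  proof -
    have "cardSuc k \<le>o Restr r (underS r p)" using p(2) unfolding ordIso_iff_ordLeq by blast
    then show ?thesis by (rule card_of_mono2)
  qed
  moreover have "Field (Restr r (underS r p)) = underS r p"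
    using Field_Restr_ofilter[OF WO wo_rel.underS_ofilter[OF wo]] .
  ultimately have 1: "|Field (cardSuc k)| \<le>o |underS r p|" by simp
  have "k <o |Field (cardSuc k)|"
    using ordLess_ordIso_trans[OF cardSuc_greater[OF kCO] ordIso_symmetric[OF card_of_Field_ordIso[OF cardSuc_Card_order[OF kCO]]]] .
  then have "k <o |underS r p|" by (rule ordLess_ordLeq_trans[OF _ 1])
  then show ?thesis using p(1) by blast
qed

lemma GUESS: "\<exists>E. club r E \<and> (\<forall>D. club r D \<longrightarrow> (\<exists>d\<in>S. d \<in> acc E \<and> gs E d \<subseteq> D))"
proof (rule ccontr)
  assume neg: "\<not> ?thesis"
  have exD: "\<exists>D. club r D \<and> (\<forall>d\<in>S. d \<in> acc E \<longrightarrow> \<not> gs E d \<subseteq> D)" if "club r E" for E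
    using neg that by blast
  define Dn where "Dn E = (SOME D. club r D \<and> (\<forall>d\<in>S. d \<in> acc E \<longrightarrow> \<not> gs E d \<subseteq> D))" for E
  have Dn: "club r (Dn E) \<and> (\<forall>d\<in>S. d \<in> acc E \<longrightarrow> \<not> gs E d \<subseteq> Dn E)" if "club r E" for E
    unfolding Dn_def using someI_ex[OF exD[OF that]] .
  define R where "R = r - Id"
  have wfR: "wf R" using WO unfolding R_def well_order_on_def by blast
  define F where "F = (\<lambda>f i. A \<inter> \<Inter>{f j \<inter> Dn (f j) | j. (j,i) \<in> R})"
  define Ec where "Ec = wfrec R F"
  have Ec_eq: "Ec i = A \<inter> \<Inter>{Ec j \<inter> Dn (Ec j) | j. (j,i) \<in> R}" for i
  proof -
    have "Ec i = F (cut Ec R i) i" unfolding Ec_def by (rule wfrec[OF wfR])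
    also have "\<dots> = A \<inter> \<Inter>{Ec j \<inter> Dn (Ec j) | j. (j,i) \<in> R}"
    proof -
      have "{cut Ec R i j \<inter> Dn (cut Ec R i j) | j. (j,i) \<in> R} = {Ec j \<inter> Dn (Ec j) | j. (j,i) \<in> R}"
        using cut_apply[of _ i R Ec] by metis
      then show ?thesis unfolding F_def by simp
    qed
    finally show ?thesis .
  qed
  have EcA: "Ec i \<subseteq> A" for i using Ec_eq[of i] by blast
  have Ec_dec: "(j,i) \<in> R \<Longrightarrow> Ec i \<subseteq> Ec j \<inter> Dn (Ec j)" for i j
    using Ec_eq[of i] by blast
  have Ec_mono: "(j,i) \<in> r \<Longrightarrow> Ec i \<subseteq> Ec j" for i j
    using Ec_dec[of j i] unfolding R_def by (cases "i = j") auto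
  have Ec_club: "i \<in> A \<Longrightarrow> club r (Ec i)" for i
    using wfR
  proof (induction i rule: wf_induct_rule)
    case (less i)
    have T: "club r (Ec j \<inter> Dn (Ec j))" if j: "(j,i) \<in> R" for j
    proof -
      have jA: "j \<in> A" using j FLD unfolding R_def by blast
      have cj: "club r (Ec j)" using less.IH[OF j jA] .
      have "club r (A \<inter> \<Inter>{Ec j, Dn (Ec j)})"
      proof (rule INTER)
        show "\<forall>D\<in>{Ec j, Dn (Ec j)}. club r D" using cj Dn[OF cj] by blast
        show "|{Ec j, Dn (Ec j)}| <o r" by (rule fin_lt[OF CO INF]) simp
      qed
      moreover have "A \<inter> \<Inter>{Ec j, Dn (Ec j)} = Ec j \<inter> Dn (Ec j)" using EcA[of j] by blast
      ultimately show ?thesis by simp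
    qed
    have fam: "{Ec j \<inter> Dn (Ec j) | j. (j,i) \<in> R} = (\<lambda>j. Ec j \<inter> Dn (Ec j)) ` underS r i"
      unfolding R_def underS_def by blast
    have "|(\<lambda>j. Ec j \<inter> Dn (Ec j)) ` underS r i| <o r"
      by (rule ordLeq_ordLess_trans[OF card_of_image card_of_underS[OF CO less.prems]])
    then have sm: "|{Ec j \<inter> Dn (Ec j) | j. (j,i) \<in> R}| <o r" unfolding fam .
    have "club r (A \<inter> \<Inter>{Ec j \<inter> Dn (Ec j) | j. (j,i) \<in> R})"
    proof (rule INTER[OF _ sm])
      show "\<forall>D\<in>{Ec j \<inter> Dn (Ec j) | j. (j,i) \<in> R}. club r D" using T by blast
    qed
    then show ?case using Ec_eq[of i] by simp
  qed
  obtain p where p: "p \<in> A" "k <o |underS r p|" "\<forall>c\<in>{q\<in>A. k <o |underS r q|}. (p,c) \<in> r"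
  proof -
    obtain q where "q \<in> A" "k <o |underS r q|" using RHO by blast
    then have "{q\<in>A. k <o |underS r q|} \<noteq> {}" by blast
    then obtain p where "p \<in> {q\<in>A. k <o |underS r q|}" "\<forall>c\<in>{q\<in>A. k <o |underS r q|}. (p,c) \<in> r"
      using MIN[of "{q\<in>A. k <o |underS r q|}"] by blast
    then show ?thesis using that by blast
  qed
  define I where "I = underS r p"
  have IA: "I \<subseteq> A" unfolding I_def underS_def using FLD by blast
  have Ibig: "k <o |I|" using p(2) I_def by simp
  have Ismall: "|I| <o r" unfolding I_def by (rule card_of_underS[OF CO p(1)])
  have Ibnd: "\<exists>i\<in>I. \<forall>x\<in>X. (x,i) \<in> r \<and> x \<noteq> i" if X: "X \<subseteq> I" "|X| \<le>o k" for X
  proof (rule ccontr)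
    assume nb: "\<not> ?thesis"
    have cover: "I \<subseteq> X \<union> (\<Union>x\<in>X. underS r x)"
    proof
      fix i assume i: "i \<in> I"
      then obtain x where x: "x \<in> X" "\<not> ((x,i) \<in> r \<and> x \<noteq> i)" using nb by blast
      then have "(i,x) \<in> r" using not_le[of x i] REFL i X(1) IA by blast
      then show "i \<in> X \<union> (\<Union>x\<in>X. underS r x)" using x unfolding underS_def by blast
    qed
    have kF: "k =o |Field k|" using ordIso_symmetric[OF card_of_Field_ordIso[OF kCO]] .
    have small_x: "|underS r x| \<le>o |Field k|" if x: "x \<in> X" for x
    proof -
      have xp: "(x,p) \<in> r" "x \<noteq> p" using x X(1) unfolding I_def underS_def by blast+
      have xA: "x \<in> A" using xp FLD by blast
      have "\<not> k <o |underS r x|"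
      proof
        assume "k <o |underS r x|"
        then have "(p,x) \<in> r" using p(3) xA by blast
        then show False using xp ANTI by blast
      qed
      then have "|underS r x| \<le>o k" using ordLess_or_ordLeq[OF kWO card_of_Well_order, of "underS r x"] by blast
      then show ?thesis by (rule ordLeq_ordIso_trans[OF _ kF])
    qed
    have "|X| \<le>o |Field k|" by (rule ordLeq_ordIso_trans[OF X(2) kF])
    then have "|\<Union>x\<in>X. underS r x| \<le>o |Field k|"
      using card_of_UNION_ordLeq_infinite[OF kINF] small_x by blast
    then have u1: "|\<Union>x\<in>X. underS r x| \<le>o k" by (rule ordLeq_ordIso_trans[OF _ ordIso_symmetric[OF kF]])
    have "|X \<union> (\<Union>x\<in>X. underS r x)| \<le>o k"
      by (rule card_of_Un_ordLeq_infinite_Field[OF kINF X(2) u1 kCO])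
    then have "|I| \<le>o k" by (rule ordLeq_transitive[OF card_of_mono1[OF cover]])
    then show False using Ibig not_ordLess_ordLeq by blast
  qed
  define Ef where "Ef = A \<inter> \<Inter>(Ec ` I)"
  have Ef_club: "club r Ef" unfolding Ef_def
  proof (rule INTER)
    show "\<forall>D\<in>Ec ` I. club r D" using Ec_club IA by blast
    show "|Ec ` I| <o r" by (rule ordLeq_ordLess_trans[OF card_of_image Ismall])
  qed
  obtain d where d: "d \<in> S" "d \<in> acc Ef" using EXS[OF Ef_club] by blast
  have nsub: "\<not> gs (Ec i) d \<subseteq> Dn (Ec i)" if i: "i \<in> I" for i
  proof -
    have "Ef \<subseteq> Ec i" unfolding Ef_def using i by blast
    then have "d \<in> acc (Ec i)" using acc_mono d(2) by blast
    then show ?thesis using Dn[OF Ec_club] i IA d(1) by blast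
  qed
  have Ine: "I \<noteq> {}"
  proof
    assume "I = {}"
    then have "|I| <o k" using fin_lt[OF kCO kINF, of I] by simp
    then have "k <o k" by (rule ordLess_transitive[OF Ibig])
    then show False using ordLess_irreflexive[of k] by blast
  qed
  have stab: "\<exists>ia\<in>I. \<forall>i\<in>I. (ia,i) \<in> r \<longrightarrow>
      (Ec i \<inter> underS r a = {} \<longleftrightarrow> Ec ia \<inter> underS r a = {}) \<and>
      lub (Ec i \<inter> underS r a) = lub (Ec ia \<inter> underS r a)" if aA: "a \<in> A" for a
  proof (cases "\<exists>i0\<in>I. Ec i0 \<inter> underS r a = {}")
    case True
    then obtain i0 where i0: "i0 \<in> I" "Ec i0 \<inter> underS r a = {}" by blast
    have "Ec i \<inter> underS r a = {}" if "(i0,i) \<in> r" for i using Ec_mono[OF that] i0(2) by blast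
    then show ?thesis using i0 by (intro bexI[of _ i0]) auto
  next
    case False
    define V where "V = (\<lambda>i. lub (Ec i \<inter> underS r a)) ` I"
    have VA: "V \<subseteq> A" unfolding V_def using LUB[OF ub_underS[OF aA]] by blast
    have "V \<noteq> {}" unfolding V_def using Ine by blast
    then obtain m where m: "m \<in> V" "\<forall>c\<in>V. (m,c) \<in> r" using MIN VA by blast
    then obtain i0 where i0: "i0 \<in> I" "m = lub (Ec i0 \<inter> underS r a)" unfolding V_def by blast
    have "lub (Ec i \<inter> underS r a) = lub (Ec i0 \<inter> underS r a)" if i: "i \<in> I" "(i0,i) \<in> r" for i
    proof -
      have sub: "Ec i \<inter> underS r a \<subseteq> Ec i0 \<inter> underS r a" using Ec_mono[OF i(2)] by blast
      have l0: "lub (Ec i0 \<inter> underS r a) \<in> A" "\<forall>x\<in>Ec i0 \<inter> underS r a. (x, lub (Ec i0 \<inter> underS r a)) \<in> r"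
        using LUB[OF ub_underS[OF aA]] by blast+
      have "(lub (Ec i \<inter> underS r a), lub (Ec i0 \<inter> underS r a)) \<in> r"
        using LUB[OF ub_underS[OF aA], of "Ec i"] l0 sub by blast
      moreover have "(lub (Ec i0 \<inter> underS r a), lub (Ec i \<inter> underS r a)) \<in> r"
      proof -
        have "lub (Ec i \<inter> underS r a) \<in> V" unfolding V_def using i(1) by blast
        then show ?thesis using m(2) i0(2) by blast
      qed
      ultimately show ?thesis using ANTI by blast
    qed
    then show ?thesis using i0(1) False by (intro bexI[of _ i0]) auto
  qed
  have ladA: "lad d \<subseteq> A" using LAD[OF d(1)] unfolding underS_def using FLD by blast
  have "\<forall>a\<in>lad d. \<exists>ia. ia \<in> I \<and> (\<forall>i\<in>I. (ia,i) \<in> r \<longrightarrow>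
      (Ec i \<inter> underS r a = {} \<longleftrightarrow> Ec ia \<inter> underS r a = {}) \<and>
      lub (Ec i \<inter> underS r a) = lub (Ec ia \<inter> underS r a))"
    using stab ladA by blast
  from bchoice[OF this] obtain h where h: "\<forall>a\<in>lad d. h a \<in> I \<and> (\<forall>i\<in>I. (h a,i) \<in> r \<longrightarrow>
      (Ec i \<inter> underS r a = {} \<longleftrightarrow> Ec (h a) \<inter> underS r a = {}) \<and>
      lub (Ec i \<inter> underS r a) = lub (Ec (h a) \<inter> underS r a))" by blast
  have "|h ` lad d| \<le>o k"
    by (rule ordLeq_transitive[OF card_of_image conjunct1[OF conjunct2[OF LAD[OF d(1)]]]])
  moreover have "h ` lad d \<subseteq> I" using h by blast
  ultimately obtain i1 where i1: "i1 \<in> I" "\<forall>x\<in>h ` lad d. (x,i1) \<in> r \<and> x \<noteq> i1" using Ibnd by blast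
  have "|{i1}| \<le>o k" using ordLess_imp_ordLeq[OF fin_lt[OF kCO kINF, of "{i1}"]] by simp
  then obtain i2 where i2: "i2 \<in> I" "(i1,i2) \<in> r" "i1 \<noteq> i2" using Ibnd[of "{i1}"] i1(1) by blast
  have i12: "(i1,i2) \<in> R" using i2 unfolding R_def by blast
  have i1A: "i1 \<in> A" using i1 IA by blast
  have cl1: "club r (Dn (Ec i1))" using Dn[OF Ec_club[OF i1A]] by blast
  have "gs (Ec i1) d \<subseteq> Dn (Ec i1)"
  proof
    fix x assume "x \<in> gs (Ec i1) d"
    then obtain a where a: "a \<in> lad d" "Ec i1 \<inter> underS r a \<noteq> {}" "x = lub (Ec i1 \<inter> underS r a)"
      unfolding gs_def by blast
    have hx: "h a \<in> h ` lad d" using a(1) by blast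
    have ha1: "(h a, i1) \<in> r" using i1(2) hx by blast
    have ha2: "(h a, i2) \<in> r" by (rule TRANS[OF ha1 i2(2)])
    have hA: "h a \<in> I \<and> (\<forall>i\<in>I. (h a,i) \<in> r \<longrightarrow>
      (Ec i \<inter> underS r a = {} \<longleftrightarrow> Ec (h a) \<inter> underS r a = {}) \<and>
      lub (Ec i \<inter> underS r a) = lub (Ec (h a) \<inter> underS r a))" using h a(1) by blast
    note Q = conjunct2[OF hA]
    have e1: "(Ec i1 \<inter> underS r a = {} \<longleftrightarrow> Ec (h a) \<inter> underS r a = {}) \<and>
         lub (Ec i1 \<inter> underS r a) = lub (Ec (h a) \<inter> underS r a)"
      using Q[rule_format, OF i1(1) ha1] .
    have e2: "(Ec i2 \<inter> underS r a = {} \<longleftrightarrow> Ec (h a) \<inter> underS r a = {}) \<and>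
         lub (Ec i2 \<inter> underS r a) = lub (Ec (h a) \<inter> underS r a)"
      using Q[rule_format, OF i2(1) ha2] .
    have ne2: "Ec i2 \<inter> underS r a \<noteq> {}" using e1 e2 a(2) by blast
    have x2: "x = lub (Ec i2 \<inter> underS r a)" using a(3) e1 e2 by simp
    have sub2: "Ec i2 \<inter> underS r a \<subseteq> Dn (Ec i1)" using Ec_dec[OF i12] by blast
    have sub3: "Ec i2 \<inter> underS r a \<subseteq> underS r a" by blast
    have aA: "a \<in> A" using ladA a(1) by blast
    show "x \<in> Dn (Ec i1)" unfolding x2 by (rule LUB_IN[OF cl1 ne2 sub2 sub3 aA])
  qed
  then show False using nsub[OF i1(1)] by blast
qed


lemma CORE: "\<exists>G::'a \<Rightarrow> 'a set. \<forall>D. club r D \<longrightarrow> (\<exists>d\<in>A. G d \<subseteq> D \<and> k \<le>o card_of (G d))"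
proof -
  obtain E where E: "club r E" "\<forall>D. club r D \<longrightarrow> (\<exists>d\<in>S. d \<in> acc E \<and> gs E d \<subseteq> D)"
    using GUESS by blast
  have "\<forall>D. club r D \<longrightarrow> (\<exists>d\<in>A. gs E d \<subseteq> D \<and> k \<le>o card_of (gs E d))"
  proof (intro allI impI)
    fix D assume "club r D"
    then obtain d where d: "d \<in> S" "d \<in> acc E" "gs E d \<subseteq> D" using E(2) by blast
    have "k \<le>o |gs E d|" by (rule GS_BIG[OF d(1,2)])
    moreover have "d \<in> A" using d(1) unfolding S_def by blast
    ultimately show "\<exists>d\<in>A. gs E d \<subseteq> D \<and> k \<le>o |gs E d|" using d(3) by blast
  qed
  then show ?thesis by blast
qed

end

lemma PIGEON:
  fixes r :: "'a rel" and lam :: "'l rel" and C :: "'c set" and g :: "'c \<Rightarrow> 'a"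
  assumes CO: "Card_order r" and rINF: "infinite (Field r)" and lCO: "Card_order lam"
    and lINF: "infinite (Field lam)"
    and cf: "cf_gt lam r" and Cc: "|C| =o lam" and g: "\<forall>D\<in>C. g D \<in> Field r"
  shows "\<exists>x\<in>Field r. |{D\<in>C. g D = x}| =o lam"
proof (rule ccontr)
  assume neg: "\<not> ?thesis"
  define F where "F x = {D\<in>C. g D = x}" for x
  have lWO: "Well_order lam" using lCO unfolding card_order_on_def by blast
  have lF: "|Field lam| =o lam" by (rule card_of_Field_ordIso[OF lCO])
  have "cofinal (Field lam) lam" unfolding cofinal_def
    using infinite_Card_order_limit[OF lCO lINF] by blast
  then have "r <o |Field lam|" using cf unfolding cf_gt_def by blast
  then have rl: "r <o lam" by (rule ordLess_ordIso_trans[OF _ lF])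
  have rl2: "|Field r| <o lam" by (rule ordIso_ordLess_trans[OF card_of_Field_ordIso[OF CO] rl])
  have Fx: "|F x| <o lam" if x: "x \<in> Field r" for x
  proof -
    have "|F x| \<le>o |C|" unfolding F_def by (rule card_of_mono1) blast
    then have "|F x| \<le>o lam" by (rule ordLeq_ordIso_trans[OF _ Cc])
    moreover have "\<not> |F x| =o lam" using neg x unfolding F_def by blast
    ultimately show ?thesis using ordLeq_iff_ordLess_or_ordIso by blast
  qed
  have "\<forall>x\<in>Field r. \<exists>q. q \<in> Field lam \<and> |F x| \<le>o |underS lam q|"
  proof
    fix x assume x: "x \<in> Field r"
    obtain q where q: "q \<in> Field lam" "|F x| =o Restr lam (underS lam q)"
      using ordLess_iff_ordIso_Restr[OF lWO card_of_Well_order] Fx[OF x] by blast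
    have "|F x| \<le>o Restr lam (underS lam q)" using q(2) unfolding ordIso_iff_ordLeq by blast
    then have "|Field |F x| | \<le>o |Field (Restr lam (underS lam q))|" by (rule card_of_mono2)
    moreover have "Field (Restr lam (underS lam q)) = underS lam q"
      using Field_Restr_ofilter[OF lWO wo_rel.underS_ofilter] lWO unfolding wo_rel_def by blast
    ultimately have "|F x| \<le>o |underS lam q|" by (simp add: Field_card_of)
    then show "\<exists>q. q \<in> Field lam \<and> |F x| \<le>o |underS lam q|" using q(1) by blast
  qed
  from bchoice[OF this] obtain q where q: "\<forall>x\<in>Field r. q x \<in> Field lam \<and> |F x| \<le>o |underS lam (q x)|" ..
  have qs: "|q ` Field r| \<le>o r" by (rule ordLeq_ordIso_trans[OF card_of_image card_of_Field_ordIso[OF CO]])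
  have "\<not> cofinal (q ` Field r) lam"
  proof
    assume "cofinal (q ` Field r) lam"
    moreover have "q ` Field r \<subseteq> Field lam" using q by blast
    ultimately have "r <o |q ` Field r|" using cf unfolding cf_gt_def by blast
    then show False using qs not_ordLess_ordLeq by blast
  qed
  then obtain b where b: "b \<in> Field lam" "\<forall>p\<in>q ` Field r. \<not> (b \<noteq> p \<and> (b,p) \<in> lam)"
    unfolding cofinal_def by blast
  have pb: "(q x, b) \<in> lam" if x: "x \<in> Field r" for x
  proof -
    have qx: "q x \<in> Field lam" using q x by blast
    have "\<not> (b \<noteq> q x \<and> (b, q x) \<in> lam)" using b(2) x by blast
    then show ?thesis using wo_rel.TOTALS[of lam] lWO qx b(1) wo_rel.REFL[of lam]
      unfolding wo_rel_def refl_on_def by blast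
  qed
  have sub_under: "underS lam (q x) \<subseteq> under lam b" if x: "x \<in> Field r" for x
  proof
    fix y assume "y \<in> underS lam (q x)"
    then have "(y, q x) \<in> lam" unfolding underS_def by blast
    moreover have "trans lam" using lWO unfolding well_order_on_def linear_order_on_def partial_order_on_def preorder_on_def by blast
    ultimately show "y \<in> under lam b" using pb[OF x] unfolding under_def trans_def by blast
  qed
  have ub: "|under lam b| <o lam"
  proof -
    have "under lam b \<subseteq> insert b (underS lam b)" unfolding under_def underS_def by blast
    moreover have "|insert b (underS lam b)| <o lam"
      by (rule ins_lt[OF lCO lINF card_of_underS[OF lCO b(1)]])
    ultimately show ?thesis using ordLeq_ordLess_trans[OF card_of_mono1] by blast
  qed
  define B where "B = Field r <+> under lam b"
  have Bl: "|B| <o lam" unfolding B_def by (rule card_of_Plus_ordLess_infinite_Field[OF lINF lCO rl2 ub])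
  have Binf: "infinite B" unfolding B_def using rINF by simp
  have FB: "\<forall>x\<in>Field r. |F x| \<le>o |B|"
  proof
    fix x assume x: "x \<in> Field r"
    have "|F x| \<le>o |underS lam (q x)|" using q x by blast
    also have "|underS lam (q x)| \<le>o |under lam b|" by (rule card_of_mono1[OF sub_under[OF x]])
    also have "|under lam b| \<le>o |B|" unfolding B_def by (rule card_of_Plus2)
    finally show "|F x| \<le>o |B|" .
  qed
  have "|\<Union>x\<in>Field r. F x| \<le>o |B|"
    by (rule card_of_UNION_ordLeq_infinite[OF Binf _ FB]) (unfold B_def, rule card_of_Plus1)
  moreover have "C \<subseteq> (\<Union>x\<in>Field r. F x)" unfolding F_def using g by blast
  ultimately have "|C| \<le>o |B|" using ordLeq_transitive[OF card_of_mono1] by blast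
  then have "|C| <o lam" by (rule ordLeq_ordLess_trans[OF _ Bl])
  then show False using Cc not_ordLess_ordIso by blast
qed

context CG2
begin

lemma MAIN:
  fixes lam :: "'l rel" and C :: "'a set set"
  assumes lCO: "Card_order lam" and cf: "cf_gt lam r" and cl: "\<forall>D\<in>C. club r D" and Cc: "|C| =o lam"
  shows "\<exists>E. E \<subseteq> C \<and> |E| =o lam \<and> k \<le>o |\<Inter>E|"
proof (cases "finite (Field lam)")
  case True
  have "finite C" using card_of_ordIso_finite_Field[OF lCO ordIso_symmetric[OF Cc]] True by blast
  then have "|C| <o r" by (rule fin_lt[OF CO INF])
  then have "club r (A \<inter> \<Inter>C)" using INTER cl by blast
  then have "|A \<inter> \<Inter>C| =o r" by (rule CLUB_CARD)
  then have "k \<le>o |A \<inter> \<Inter>C|" using ordLess_imp_ordLeq[OF ordLess_ordIso_trans[OF klt ordIso_symmetric]] by blast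
  then have "k \<le>o |\<Inter>C|" by (rule ordLeq_transitive[OF _ card_of_mono1]) blast
  then show ?thesis using Cc by blast
next
  case False
  obtain G where G: "\<forall>D. club r D \<longrightarrow> (\<exists>d\<in>A. G d \<subseteq> D \<and> k \<le>o card_of (G d))" using CORE by blast
  have "\<forall>D\<in>C. \<exists>d. d \<in> A \<and> G d \<subseteq> D \<and> k \<le>o |G d|" using G cl by blast
  from bchoice[OF this] obtain g where g: "\<forall>D\<in>C. g D \<in> A \<and> G (g D) \<subseteq> D \<and> k \<le>o |G (g D)|" ..
  have "\<exists>x\<in>A. |{D\<in>C. g D = x}| =o lam"
    by (rule PIGEON[OF CO INF lCO False cf Cc]) (use g in blast)
  then obtain x where x: "x \<in> A" "|{D\<in>C. g D = x}| =o lam" by blast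
  define E where "E = {D\<in>C. g D = x}"
  have "E \<noteq> {}"
  proof
    assume "E = {}"
    then have "finite E" by simp
    then have "finite (Field lam)" using card_of_ordIso_finite_Field[OF lCO ordIso_symmetric] x(2) E_def by blast
    then show False using False by blast
  qed
  then obtain D0 where D0: "D0 \<in> E" by blast
  have "G x \<subseteq> \<Inter>E" unfolding E_def using g by blast
  moreover have "k \<le>o |G x|" using g D0 unfolding E_def by blast
  ultimately have "k \<le>o |\<Inter>E|" using ordLeq_transitive[OF _ card_of_mono1] by blast
  moreover have "E \<subseteq> C" unfolding E_def by blast
  ultimately show ?thesis using x(2) E_def by blast
qed

end

lemma Cinf_nat: "Cinfinite |UNIV :: nat set|"
  unfolding cinfinite_def using card_of_Card_order by (simp add: Field_card_of)

lemma reg_nat: "regularCard |UNIV :: nat set|"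
  by (rule regularCard_ordIso[OF ordIso_symmetric[OF card_of_nat] natLeq_Cinfinite regularCard_natLeq])

lemma nat_le: assumes "Card_order m" "infinite (Field m)" shows "|UNIV :: nat set| \<le>o m"
proof -
  have "|UNIV :: nat set| \<le>o |Field m|" using assms(2) infinite_iff_card_of_nat by blast
  then show ?thesis by (rule ordLeq_ordIso_trans[OF _ card_of_Field_ordIso[OF assms(1)]])
qed

lemma CG_suc:
  fixes m :: "'m rel" and r :: "'b rel"
  assumes mC: "Cinfinite m" and rCO: "Card_order r" and rm: "r =o cardSuc m"
  shows "CG r"
proof (rule CG.intro[OF rCO])
  have c1: "Cinfinite (cardSuc m)" by (rule Cinfinite_cardSuc[OF mC])
  show "regularCard r" by (rule regularCard_ordIso[OF ordIso_symmetric[OF rm] c1 regularCard_cardSuc[OF mC]])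
  have "|UNIV :: nat set| \<le>o m" using nat_le mC unfolding cinfinite_def by blast
  then have "|UNIV :: nat set| <o cardSuc m" by (rule ordLeq_ordLess_trans[OF _ cardSuc_greater]) (use mC in blast)
  then show "|UNIV :: nat set| <o r" by (rule ordLess_ordIso_trans[OF _ ordIso_symmetric[OF rm]])
qed

lemma PART1:
  fixes kappa :: "'k rel" and r :: "'a rel" and lam :: "'l rel" and C :: "'a set set"
  assumes kr: "regular_cardinal kappa" and rCO: "Card_order r" and rk: "r =o cardSuc (cardSuc kappa)"
    and lCO: "Card_order lam" and cf: "cf_gt lam r" and cl: "\<forall>D \<in> C. club r D" and Cc: "|C| =o lam"
  shows "\<exists>E. E \<subseteq> C \<and> |E| =o lam \<and> kappa \<le>o |\<Inter>E|"
proof -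
  have kC: "Cinfinite kappa" "regularCard kappa" using kr unfolding regular_cardinal_def by blast+
  have c1: "Cinfinite (cardSuc kappa)" by (rule Cinfinite_cardSuc[OF kC(1)])
  have cg: "CG r" by (rule CG_suc[OF c1 rCO rk])
  have "cardSuc kappa <o cardSuc (cardSuc kappa)" by (rule cardSuc_greater) (use c1 in blast)
  then have "cardSuc kappa <o r" by (rule ordLess_ordIso_trans[OF _ ordIso_symmetric[OF rk]])
  then have cg2: "CG2 r kappa"
    using cg kC unfolding cinfinite_def by (intro CG2.intro CG2_axioms.intro) auto
  show ?thesis by (rule CG2.MAIN[OF cg2 lCO cf cl Cc])
qed

lemma PART2:
  fixes mu :: "'m rel" and r :: "'b rel" and lam :: "'l rel" and C :: "'b set set" and theta :: "'t rel"
  assumes ms: "singular_cardinal mu" and rCO: "Card_order r" and rm: "r =o cardSuc mu"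
    and lCO: "Card_order lam" and cf: "cf_gt lam r" and cl: "\<forall>D \<in> C. club r D"
    and Cc: "|C| =o lam" and tCO: "Card_order theta" and tm: "theta <o mu"
  shows "\<exists>E. E \<subseteq> C \<and> |E| =o lam \<and> theta \<le>o |\<Inter>E|"
proof -
  have mC: "Cinfinite mu" and mnr: "\<not> regularCard mu" using ms unfolding singular_cardinal_def by blast+
  have mINF: "infinite (Field mu)" using mC unfolding cinfinite_def by blast
  have cg: "CG r" by (rule CG_suc[OF mC rCO rm])
  have natm: "|UNIV :: nat set| <o mu"
  proof -
    have "|UNIV :: nat set| \<le>o mu" using nat_le mC unfolding cinfinite_def by blast
    moreover have "\<not> |UNIV :: nat set| =o mu"
    proof
      assume "|UNIV :: nat set| =o mu"
      then have "regularCard mu" by (rule regularCard_ordIso[OF _ Cinf_nat reg_nat])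
      then show False using mnr by blast
    qed
    ultimately show ?thesis using ordLeq_iff_ordLess_or_ordIso by blast
  qed
  define t0 where "t0 = |Field theta <+> (UNIV :: nat set)|"
  have ft: "|Field theta| <o mu" by (rule ordIso_ordLess_trans[OF card_of_Field_ordIso[OF tCO] tm])
  have t0m: "t0 <o mu" unfolding t0_def by (rule card_of_Plus_ordLess_infinite_Field[OF mINF _ ft natm]) (use mC in blast)
  have t0C: "Cinfinite t0" unfolding t0_def cinfinite_def using card_of_Card_order by (simp add: Field_card_of)
  define k where "k = cardSuc t0"
  have kC: "Cinfinite k" unfolding k_def by (rule Cinfinite_cardSuc[OF t0C])
  have kR: "regularCard k" unfolding k_def by (rule regularCard_cardSuc[OF t0C])
  have "k \<le>o mu" unfolding k_def by (rule cardSuc_least) (use t0C mC t0m in blast)+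
  moreover have "\<not> k =o mu"
  proof
    assume "k =o mu"
    then have "regularCard mu" by (rule regularCard_ordIso[OF _ kC kR])
    then show False using mnr by blast
  qed
  ultimately have km: "k <o mu" using ordLeq_iff_ordLess_or_ordIso by blast
  have "cardSuc k \<le>o mu" by (rule cardSuc_least) (use kC mC km in blast)+
  moreover have "mu <o r" by (rule ordLess_ordIso_trans[OF cardSuc_greater ordIso_symmetric[OF rm]]) (use mC in blast)
  ultimately have "cardSuc k <o r" by (rule ordLeq_ordLess_trans)
  then have cg2: "CG2 r k"
    using cg kC kR unfolding cinfinite_def by (intro CG2.intro CG2_axioms.intro) auto
  obtain E where E: "E \<subseteq> C" "|E| =o lam" "k \<le>o |\<Inter>E|" using CG2.MAIN[OF cg2 lCO cf cl Cc] by blast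
  have "theta \<le>o t0"
    unfolding t0_def by (rule ordIso_ordLeq_trans[OF ordIso_symmetric[OF card_of_Field_ordIso[OF tCO]] card_of_Plus1])
  also have "t0 \<le>o k" unfolding k_def by (rule ordLess_imp_ordLeq[OF cardSuc_greater]) (use t0C in blast)
  also note E(3)
  finally show ?thesis using E(1,2) by blast
qed

lemma PART3:
  fixes kappa :: "'k rel" and r :: "'c rel" and lam :: "'l rel" and C :: "'c set set" and theta :: "'t rel"
  assumes kw: "weakly_inaccessible kappa" and rCO: "Card_order r" and rk: "r =o cardSuc kappa"
    and lCO: "Card_order lam" and cf: "cf_gt lam r" and cl: "\<forall>D \<in> C. club r D"
    and Cc: "|C| =o lam" and tCO: "Card_order theta" and tk: "theta <o kappa"
  shows "\<exists>E. E \<subseteq> C \<and> |E| =o lam \<and> theta \<le>o |\<Inter>E|"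
proof -
  have kC: "Cinfinite kappa" and natk: "|UNIV :: nat set| <o kappa"
    and lim: "\<forall>nu :: 'k rel. Card_order nu \<and> nu <o kappa \<longrightarrow> cardSuc nu <o kappa"
    using kw unfolding weakly_inaccessible_def regular_cardinal_def by blast+
  have kINF: "infinite (Field kappa)" using kC unfolding cinfinite_def by blast
  have cg: "CG r" by (rule CG_suc[OF kC rCO rk])
  define t0 where "t0 = |Field theta <+> (UNIV :: nat set)|"
  have ft: "|Field theta| <o kappa" by (rule ordIso_ordLess_trans[OF card_of_Field_ordIso[OF tCO] tk])
  have t0k: "t0 <o kappa" unfolding t0_def by (rule card_of_Plus_ordLess_infinite_Field[OF kINF _ ft natk]) (use kC in blast)
  obtain B where B: "B \<subseteq> Field kappa" "t0 =o |B|" "|B| <o kappa"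
    using t0k internalize_card_of_ordLess[of "Field theta <+> (UNIV :: nat set)" kappa] unfolding t0_def by blast
  have t0C: "Cinfinite t0" unfolding t0_def cinfinite_def using card_of_Card_order by (simp add: Field_card_of)
  have "infinite B"
  proof -
    have "infinite (Field theta <+> (UNIV :: nat set))" by simp
    then show ?thesis using card_of_ordIso_finite B(2) unfolding t0_def by blast
  qed
  then have bC: "Cinfinite |B|" unfolding cinfinite_def using card_of_Card_order by (simp add: Field_card_of)
  define k where "k = cardSuc |B|"
  have kC2: "Cinfinite k" unfolding k_def by (rule Cinfinite_cardSuc[OF bC])
  have kR: "regularCard k" unfolding k_def by (rule regularCard_cardSuc[OF bC])
  have kk: "k <o kappa" unfolding k_def using lim card_of_Card_order B(3) by blast
  have "cardSuc k \<le>o kappa" by (rule cardSuc_least) (use kC2 kC kk in blast)+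
  moreover have "kappa <o r" by (rule ordLess_ordIso_trans[OF cardSuc_greater ordIso_symmetric[OF rk]]) (use kC in blast)
  ultimately have "cardSuc k <o r" by (rule ordLeq_ordLess_trans)
  then have cg2: "CG2 r k"
    using cg kC2 kR unfolding cinfinite_def by (intro CG2.intro CG2_axioms.intro) auto
  obtain E where E: "E \<subseteq> C" "|E| =o lam" "k \<le>o |\<Inter>E|" using CG2.MAIN[OF cg2 lCO cf cl Cc] by blast
  have "theta \<le>o t0"
    unfolding t0_def by (rule ordIso_ordLeq_trans[OF ordIso_symmetric[OF card_of_Field_ordIso[OF tCO]] card_of_Plus1])
  also have "t0 \<le>o |B|" using B(2) unfolding ordIso_iff_ordLeq by blast
  also have "|B| \<le>o k" unfolding k_def by (rule ordLess_imp_ordLeq[OF cardSuc_greater]) (use bC in blast)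
  also note E(3)
  finally show ?thesis using E(1,2) by blast
qed

theorem proposition4p2:
  shows
   \<comment> \<open>(aleph): r is (isomorphic to) kappa^{++}\<close>
   "(\<forall>(kappa :: 'k rel) (r :: 'a rel) (lam :: 'l rel) (C :: 'a set set).
       regular_cardinal kappa \<and> Card_order r \<and> r =o cardSuc (cardSuc kappa) \<and>
       Card_order lam \<and> cf_gt lam r \<and>
       (\<forall>D \<in> C. club r D) \<and> (card_of (C)) =o lam
       \<longrightarrow> (\<exists>E. E \<subseteq> C \<and> (card_of (E)) =o lam \<and> kappa \<le>o (card_of (\<Inter>E))))
    \<and>
   \<comment> \<open>(beth): r is (isomorphic to) mu^+, mu singular\<close>
    (\<forall>(mu :: 'm rel) (r :: 'b rel) (lam :: 'l rel) (C :: 'b set set).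
       singular_cardinal mu \<and> Card_order r \<and> r =o cardSuc mu \<and>
       Card_order lam \<and> cf_gt lam r \<and>
       (\<forall>D \<in> C. club r D) \<and> Gal_fail_witness (club_filter r) r lam C
       \<longrightarrow> (\<forall>theta :: 't rel. Card_order theta \<and> theta <o mu \<longrightarrow>
              (\<exists>E. E \<subseteq> C \<and> (card_of (E)) =o lam \<and> theta \<le>o (card_of (\<Inter>E)))))
    \<and>
   \<comment> \<open>(gimel): r is (isomorphic to) kappa^+, kappa weakly inaccessible\<close>
    (\<forall>(kappa :: 'k rel) (r :: 'c rel) (lam :: 'l rel) (C :: 'c set set).
       weakly_inaccessible kappa \<and> Card_order r \<and> r =o cardSuc kappa \<and>
       Card_order lam \<and> cf_gt lam r \<and>
       (\<forall>D \<in> C. club r D) \<and> Gal_fail_witness (club_filter r) r lam C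
       \<longrightarrow> (\<forall>theta :: 't rel. Card_order theta \<and> theta <o kappa \<longrightarrow>
              (\<exists>E. E \<subseteq> C \<and> (card_of (E)) =o lam \<and> theta \<le>o (card_of (\<Inter>E)))))"
proof (intro conjI allI impI)
  fix kappa :: "'k rel" and r :: "'a rel" and lam :: "'l rel" and C :: "'a set set"
  assume h: "regular_cardinal kappa \<and> Card_order r \<and> r =o cardSuc (cardSuc kappa) \<and>
       Card_order lam \<and> cf_gt lam r \<and> (\<forall>D \<in> C. club r D) \<and> (card_of (C)) =o lam"
  then show "\<exists>E. E \<subseteq> C \<and> (card_of (E)) =o lam \<and> kappa \<le>o (card_of (\<Inter>E))"
    using PART1 by blast
next
  fix mu :: "'m rel" and r :: "'b rel" and lam :: "'l rel" and C :: "'b set set" and theta :: "'t rel"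
  assume h: "singular_cardinal mu \<and> Card_order r \<and> r =o cardSuc mu \<and>
       Card_order lam \<and> cf_gt lam r \<and>
       (\<forall>D \<in> C. club r D) \<and> Gal_fail_witness (club_filter r) r lam C"
    and t: "Card_order theta \<and> theta <o mu"
  have Cc: "|C| =o lam" using h unfolding Gal_fail_witness_def by blast
  show "\<exists>E. E \<subseteq> C \<and> (card_of (E)) =o lam \<and> theta \<le>o (card_of (\<Inter>E))"
    using PART2[of mu r lam C theta] h t Cc by blast
next
  fix kappa :: "'k rel" and r :: "'c rel" and lam :: "'l rel" and C :: "'c set set" and theta :: "'t rel"
  assume h: "weakly_inaccessible kappa \<and> Card_order r \<and> r =o cardSuc kappa \<and>
       Card_order lam \<and> cf_gt lam r \<and>
       (\<forall>D \<in> C. club r D) \<and> Gal_fail_witness (club_filter r) r lam C"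
    and t: "Card_order theta \<and> theta <o kappa"
  have Cc: "|C| =o lam" using h unfolding Gal_fail_witness_def by blast
  show "\<exists>E. E \<subseteq> C \<and> (card_of (E)) =o lam \<and> theta \<le>o (card_of (\<Inter>E))"
    using PART3[of kappa r lam C theta] h t Cc by blast
qed

end
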